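(* Let $\mathcal{X}$ be an extension-closed subcategory of $\mathcal{C}$ and $\mathcal{W}$ a cogenerator for $\mathcal{X}$. Let $n\ge1$ and $C\in\mathcal{C}$. Then $C\in\widehat{\mathcal{X}}_n$ if and only if there exists an $\mathbb{E}$-triangle sequence $W_n\to\cdots\to W_2\to W_1\to X_0\to C$ with $X_0\in\mathcal{X}$ and $W_i\in\mathcal{W}$ for $1\le i\le n$, i.e. there exist $\mathbb{E}$-triangles $K_1\to X_0\to C\dashrightarrow$ and $K_{i+1}\to W_i\to K_i\dashrightarrow$ for $1\le i\le n-1$, with $K_n=W_n$.
   Context: $\mathcal{C}=(\mathcal{C},\mathbb{E},\mathfrak{s})$ is an extriangulated category (in the sense of Nakaoka–Palu) with enough projectives and enough injectives; a conflation realizing $\delta\in\mathbb{E}(C,A)$ is written as an $\mathbb{E}$-triangle $A\to B\to C\dashrightarrow$. All subcategories are full, additive, closed under isomorphisms and direct summands. $\mathcal{X}$ is extension-closed if for every $\mathbb{E}$-triangle $A\to B\to C\dashrightarrow$ with $A,C\in\mathcal{X}$ one has $B\in\mathcal{X}$. $\mathcal{W}$ is a cogenerator for $\mathcal{X}$ if $\mathcal{W}\subseteq\mathcal{X}$ and for each $X\in\mathcal{X}$ there is an $\mathbb{E}$-triangle $X\to W\to X'\dashrightarrow$ with $W\in\mathcal{W}$, $X'\in\mathcal{X}$. For $n\ge0$, $\widehat{\mathcal{X}}_n$ is the subcategory of objects $C$ for which there exist $\mathbb{E}$-triangles $K_{i+1}\to X_i\to K_i\dashrightarrow$ ($0\le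 i\le n-1$) with $K_0=C$, all $X_i\in\mathcal{X}$ and $K_n\in\mathcal{X}$. *)

theory Defs
  imports Main "HOL-Algebra.Group"
begin

text \<open>All operations carry their objects explicitly:
  cmp A B C g f is the composite g o f of f : A -> B and g : B -> C;
  madd A B / mzero A B are addition / zero in Hom A B;
  Ext C A is the abelian group E(C,A) with eadd C A / ezero C A;
  epush C A A' a d = a_* d  for a : A -> A' and d in E(C,A);
  epull C' C A c d = c^* d  for c : C' -> C and d in E(C,A);
  rlz A B C x y d means that the sequence A -x-> B -y-> C belongs to the
  class s(d), i.e. A -x-> B -y-> C -d-> is an E-triangle.\<close>

record ('o,'m,'e) extri =
  Ob    :: "'o set"
  Hom   :: "'o \<Rightarrow> 'o \<Rightarrow> 'm set"
  cmp   :: "'o \<Rightarrow> 'o \<Rightarrow> 'o \<Rightarrow> 'm \<Rightarrow> 'm \<Rightarrow> 'm"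
  idm   :: "'o \<Rightarrow> 'm"
  madd  :: "'o \<Rightarrow> 'o \<Rightarrow> 'm \<Rightarrow> 'm \<Rightarrow> 'm"
  mzero :: "'o \<Rightarrow> 'o \<Rightarrow> 'm"
  Ext   :: "'o \<Rightarrow> 'o \<Rightarrow> 'e set"
  eadd  :: "'o \<Rightarrow> 'o \<Rightarrow> 'e \<Rightarrow> 'e \<Rightarrow> 'e"
  ezero :: "'o \<Rightarrow> 'o \<Rightarrow> 'e"
  epush :: "'o \<Rightarrow> 'o \<Rightarrow> 'o \<Rightarrow> 'm \<Rightarrow> 'e \<Rightarrow> 'e"
  epull :: "'o \<Rightarrow> 'o \<Rightarrow> 'o \<Rightarrow> 'm \<Rightarrow> 'e \<Rightarrow> 'e"
  rlz   :: "'o \<Rightarrow> 'o \<Rightarrow> 'o \<Rightarrow> 'm \<Rightarrow> 'm \<Rightarrow> 'e \<Rightarrow> bool"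

definition hom_group :: "('o,'m,'e) extri \<Rightarrow> 'o \<Rightarrow> 'o \<Rightarrow> 'm monoid" where
  "hom_group K A B = \<lparr>carrier = Hom K A B, mult = madd K A B, one = mzero K A B\<rparr>"

definition ext_group :: "('o,'m,'e) extri \<Rightarrow> 'o \<Rightarrow> 'o \<Rightarrow> 'e monoid" where
  "ext_group K C A = \<lparr>carrier = Ext K C A, mult = eadd K C A, one = ezero K C A\<rparr>"

definition isom :: "('o,'m,'e) extri \<Rightarrow> 'o \<Rightarrow> 'o \<Rightarrow> 'm \<Rightarrow> bool" where
  "isom K A B f \<longleftrightarrow> f \<in> Hom K A B \<and>
     (\<exists>g\<in>Hom K B A. cmp K A B A g f = idm K A \<and> cmp K B A B f g = idm K B)"

definition biprod :: "('o,'m,'e) extri \<Rightarrow> 'o \<Rightarrow> 'o \<Rightarrow> 'o \<Rightarrow> 'm \<Rightarrow> 'm \<Rightarrow> 'm \<Rightarrow> 'm \<Rightarrow> bool" where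
  "biprod K A C S i1 i2 p1 p2 \<longleftrightarrow> A \<in> Ob K \<and> C \<in> Ob K \<and> S \<in> Ob K \<and>
     i1 \<in> Hom K A S \<and> i2 \<in> Hom K C S \<and> p1 \<in> Hom K S A \<and> p2 \<in> Hom K S C \<and>
     cmp K A S A p1 i1 = idm K A \<and> cmp K C S C p2 i2 = idm K C \<and>
     cmp K C S A p1 i2 = mzero K C A \<and> cmp K A S C p2 i1 = mzero K A C \<and>
     madd K S S (cmp K S A S i1 p1) (cmp K S C S i2 p2) = idm K S"

definition additive_cat :: "('o,'m,'e) extri \<Rightarrow> bool" where
  "additive_cat K \<longleftrightarrow>
     (\<forall>A\<in>Ob K. \<forall>B\<in>Ob K. \<forall>C\<in>Ob K. \<forall>f\<in>Hom K A B. \<forall>g\<in>Hom K B C.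
        cmp K A B C g f \<in> Hom K A C) \<and>
     (\<forall>A\<in>Ob K. idm K A \<in> Hom K A A) \<and>
     (\<forall>A\<in>Ob K. \<forall>B\<in>Ob K. \<forall>f\<in>Hom K A B.
        cmp K A A B f (idm K A) = f \<and> cmp K A B B (idm K B) f = f) \<and>
     (\<forall>A\<in>Ob K. \<forall>B\<in>Ob K. \<forall>C\<in>Ob K. \<forall>D\<in>Ob K.
        \<forall>f\<in>Hom K A B. \<forall>g\<in>Hom K B C. \<forall>h\<in>Hom K C D.
        cmp K A C D h (cmp K A B C g f) = cmp K A B D (cmp K B C D h g) f) \<and>
     (\<forall>A\<in>Ob K. \<forall>B\<in>Ob K. comm_group (hom_group K A B)) \<and>
     (\<forall>A\<in>Ob K. \<forall>B\<in>Ob K. \<forall>C\<in>Ob K. \<forall>f\<in>Hom K A B. \<forall>f'\<in>Hom K A B. \<forall>g\<in>Hom K B C.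
        cmp K A B C g (madd K A B f f') = madd K A C (cmp K A B C g f) (cmp K A B C g f')) \<and>
     (\<forall>A\<in>Ob K. \<forall>B\<in>Ob K. \<forall>C\<in>Ob K. \<forall>f\<in>Hom K A B. \<forall>g\<in>Hom K B C. \<forall>g'\<in>Hom K B C.
        cmp K A B C (madd K B C g g') f = madd K A C (cmp K A B C g f) (cmp K A B C g' f)) \<and>
     (\<exists>Z\<in>Ob K. idm K Z = mzero K Z Z) \<and>
     (\<forall>A\<in>Ob K. \<forall>C\<in>Ob K. \<exists>S i1 i2 p1 p2. biprod K A C S i1 i2 p1 p2)"

definition biadditive_E :: "('o,'m,'e) extri \<Rightarrow> bool" where
  "biadditive_E K \<longleftrightarrow>
     (\<forall>C\<in>Ob K. \<forall>A\<in>Ob K. comm_group (ext_group K C A)) \<and>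
     (\<forall>C\<in>Ob K. \<forall>A\<in>Ob K. \<forall>A'\<in>Ob K. \<forall>a\<in>Hom K A A'. \<forall>d\<in>Ext K C A.
        epush K C A A' a d \<in> Ext K C A') \<and>
     (\<forall>C'\<in>Ob K. \<forall>C\<in>Ob K. \<forall>A\<in>Ob K. \<forall>c\<in>Hom K C' C. \<forall>d\<in>Ext K C A.
        epull K C' C A c d \<in> Ext K C' A) \<and>
     (\<forall>C\<in>Ob K. \<forall>A\<in>Ob K. \<forall>d\<in>Ext K C A.
        epush K C A A (idm K A) d = d \<and> epull K C C A (idm K C) d = d) \<and>
     (\<forall>C\<in>Ob K. \<forall>A\<in>Ob K. \<forall>A'\<in>Ob K. \<forall>A''\<in>Ob K. \<forall>a\<in>Hom K A A'. \<forall>a'\<in>Hom K A' A''.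
        \<forall>d\<in>Ext K C A.
        epush K C A' A'' a' (epush K C A A' a d) = epush K C A A'' (cmp K A A' A'' a' a) d) \<and>
     (\<forall>C''\<in>Ob K. \<forall>C'\<in>Ob K. \<forall>C\<in>Ob K. \<forall>A\<in>Ob K. \<forall>c\<in>Hom K C' C. \<forall>c'\<in>Hom K C'' C'.
        \<forall>d\<in>Ext K C A.
        epull K C'' C' A c' (epull K C' C A c d) = epull K C'' C A (cmp K C'' C' C c c') d) \<and>
     (\<forall>C'\<in>Ob K. \<forall>C\<in>Ob K. \<forall>A\<in>Ob K. \<forall>A'\<in>Ob K. \<forall>c\<in>Hom K C' C. \<forall>a\<in>Hom K A A'.
        \<forall>d\<in>Ext K C A.
        epull K C' C A' c (epush K C A A' a d) = epush K C' A A' a (epull K C' C A c d)) \<and>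
     (\<forall>C\<in>Ob K. \<forall>A\<in>Ob K. \<forall>A'\<in>Ob K. \<forall>a\<in>Hom K A A'. \<forall>d\<in>Ext K C A. \<forall>d'\<in>Ext K C A.
        epush K C A A' a (eadd K C A d d') = eadd K C A' (epush K C A A' a d) (epush K C A A' a d')) \<and>
     (\<forall>C'\<in>Ob K. \<forall>C\<in>Ob K. \<forall>A\<in>Ob K. \<forall>c\<in>Hom K C' C. \<forall>d\<in>Ext K C A. \<forall>d'\<in>Ext K C A.
        epull K C' C A c (eadd K C A d d') = eadd K C' A (epull K C' C A c d) (epull K C' C A c d')) \<and>
     (\<forall>C\<in>Ob K. \<forall>A\<in>Ob K. \<forall>A'\<in>Ob K. \<forall>a\<in>Hom K A A'. \<forall>b\<in>Hom K A A'. \<forall>d\<in>Ext K C A.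
        epush K C A A' (madd K A A' a b) d = eadd K C A' (epush K C A A' a d) (epush K C A A' b d)) \<and>
     (\<forall>C'\<in>Ob K. \<forall>C\<in>Ob K. \<forall>A\<in>Ob K. \<forall>c\<in>Hom K C' C. \<forall>e\<in>Hom K C' C. \<forall>d\<in>Ext K C A.
        epull K C' C A (madd K C' C c e) d = eadd K C' A (epull K C' C A c d) (epull K C' C A e d))"

definition seq_equiv :: "('o,'m,'e) extri \<Rightarrow> 'o \<Rightarrow> 'o \<Rightarrow> 'o \<Rightarrow> 'o \<Rightarrow> 'm \<Rightarrow> 'm \<Rightarrow> 'm \<Rightarrow> 'm \<Rightarrow> bool" where
  "seq_equiv K A B B' C x y x' y' \<longleftrightarrow>
     (\<exists>b. isom K B B' b \<and> cmp K A B B' b x = x' \<and> cmp K B B' C y' b = y)"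

text \<open>s is a realization of E: each s(d) is one equivalence class of sequences,
  compatible with morphisms of extensions (Def. 2.9).\<close>
definition realization :: "('o,'m,'e) extri \<Rightarrow> bool" where
  "realization K \<longleftrightarrow>
     (\<forall>A B C x y d. rlz K A B C x y d \<longrightarrow>
        A \<in> Ob K \<and> B \<in> Ob K \<and> C \<in> Ob K \<and> x \<in> Hom K A B \<and> y \<in> Hom K B C \<and> d \<in> Ext K C A) \<and>
     (\<forall>A\<in>Ob K. \<forall>C\<in>Ob K. \<forall>d\<in>Ext K C A. \<exists>B x y. rlz K A B C x y d) \<and>
     (\<forall>A B C x y d B' x' y'. rlz K A B C x y d \<longrightarrow>
        (rlz K A B' C x' y' d \<longleftrightarrow>
          (B' \<in> Ob K \<and> x' \<in> Hom K A B' \<and> y' \<in> Hom K B' C \<and> seq_equiv K A B B' C x y x' y'))) \<and>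
     (\<forall>A B C x y d A' B' C' x' y' d' a c.
        rlz K A B C x y d \<and> rlz K A' B' C' x' y' d' \<and> a \<in> Hom K A A' \<and> c \<in> Hom K C C' \<and>
        epush K C A A' a d = epull K C C' A' c d' \<longrightarrow>
        (\<exists>b\<in>Hom K B B'. cmp K A B B' b x = cmp K A A' B' x' a \<and>
                          cmp K B B' C' y' b = cmp K B C C' c y))"

definition additive_realization :: "('o,'m,'e) extri \<Rightarrow> bool" where
  "additive_realization K \<longleftrightarrow>
     (\<forall>A C S i1 i2 p1 p2. biprod K A C S i1 i2 p1 p2 \<longrightarrow> rlz K A S C i1 p2 (ezero K C A)) \<and>
     (\<forall>A B C x y d A' B' C' x' y' d' SA ia ia' pa pa' SB ib ib' pb pb' SC ic ic' pc pc'.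
        rlz K A B C x y d \<and> rlz K A' B' C' x' y' d' \<and>
        biprod K A A' SA ia ia' pa pa' \<and> biprod K B B' SB ib ib' pb pb' \<and>
        biprod K C C' SC ic ic' pc pc' \<longrightarrow>
        rlz K SA SB SC
          (madd K SA SB (cmp K SA A SB (cmp K A B SB ib x) pa) (cmp K SA A' SB (cmp K A' B' SB ib' x') pa'))
          (madd K SB SC (cmp K SB B SC (cmp K B C SC ic y) pb) (cmp K SB B' SC (cmp K B' C' SC ic' y') pb'))
          (eadd K SC SA (epush K SC A SA ia (epull K SC C A pc d))
                        (epush K SC A' SA ia' (epull K SC C' A' pc' d'))))"

definition ET3 :: "('o,'m,'e) extri \<Rightarrow> bool" where
  "ET3 K \<longleftrightarrow>
     (\<forall>A B C x y d A' B' C' x' y' d' a b.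
        rlz K A B C x y d \<and> rlz K A' B' C' x' y' d' \<and> a \<in> Hom K A A' \<and> b \<in> Hom K B B' \<and>
        cmp K A B B' b x = cmp K A A' B' x' a \<longrightarrow>
        (\<exists>c\<in>Hom K C C'. cmp K B C C' c y = cmp K B B' C' y' b \<and>
                          epush K C A A' a d = epull K C C' A' c d'))"

definition ET3op :: "('o,'m,'e) extri \<Rightarrow> bool" where
  "ET3op K \<longleftrightarrow>
     (\<forall>A B C x y d A' B' C' x' y' d' b c.
        rlz K A B C x y d \<and> rlz K A' B' C' x' y' d' \<and> b \<in> Hom K B B' \<and> c \<in> Hom K C C' \<and>
        cmp K B C C' c y = cmp K B B' C' y' b \<longrightarrow>
        (\<exists>a\<in>Hom K A A'. cmp K A B B' b x = cmp K A A' B' x' a \<and>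
                          epush K C A A' a d = epull K C C' A' c d'))"

definition ET4 :: "('o,'m,'e) extri \<Rightarrow> bool" where
  "ET4 K \<longleftrightarrow>
     (\<forall>A B C D F f f' g g' d d'.
        rlz K A B D f f' d \<and> rlz K B C F g g' d' \<longrightarrow>
        (\<exists>E h' e1 e2 d''. E \<in> Ob K \<and> h' \<in> Hom K C E \<and> e1 \<in> Hom K D E \<and> e2 \<in> Hom K E F \<and>
           d'' \<in> Ext K E A \<and>
           rlz K A C E (cmp K A B C g f) h' d'' \<and>
           cmp K B D E e1 f' = cmp K B C E h' g \<and>
           cmp K C E F e2 h' = g' \<and>
           rlz K D E F e1 e2 (epush K F B D f' d') \<and>
           epull K D E A e1 d'' = d \<and>
           epush K E A B f d'' = epull K E F B e2 d'))"

definition ET4op :: "('o,'m,'e) extri \<Rightarrow> bool" where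
  "ET4op K \<longleftrightarrow>
     (\<forall>A B C D F f f' g g' d d'.
        rlz K D B A f' f d \<and> rlz K F C B g' g d' \<longrightarrow>
        (\<exists>E h' e1 e2 d''. E \<in> Ob K \<and> h' \<in> Hom K E C \<and> e1 \<in> Hom K E D \<and> e2 \<in> Hom K F E \<and>
           d'' \<in> Ext K A E \<and>
           rlz K E C A h' (cmp K C B A f g) d'' \<and>
           cmp K E D B f' e1 = cmp K E C B g h' \<and>
           cmp K F E C h' e2 = g' \<and>
           rlz K F E D e2 e1 (epull K D B F f' d') \<and>
           epush K A E D e1 d'' = d \<and>
           epull K B A E f d'' = epush K B F E e2 d'))"

definition extriangulated :: "('o,'m,'e) extri \<Rightarrow> bool" where
  "extriangulated K \<longleftrightarrow> additive_cat K \<and> biadditive_E K \<and> realization K \<and>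
     additive_realization K \<and> ET3 K \<and> ET3op K \<and> ET4 K \<and> ET4op K"

definition etri :: "('o,'m,'e) extri \<Rightarrow> 'o \<Rightarrow> 'o \<Rightarrow> 'o \<Rightarrow> bool" where
  "etri K A B C \<longleftrightarrow> (\<exists>x y d. rlz K A B C x y d)"

definition projective_obj :: "('o,'m,'e) extri \<Rightarrow> 'o \<Rightarrow> bool" where
  "projective_obj K P \<longleftrightarrow> P \<in> Ob K \<and>
     (\<forall>A B C x y d. rlz K A B C x y d \<longrightarrow>
        (\<forall>c\<in>Hom K P C. \<exists>b\<in>Hom K P B. cmp K P B C y b = c))"

definition injective_obj :: "('o,'m,'e) extri \<Rightarrow> 'o \<Rightarrow> bool" where
  "injective_obj K I \<longleftrightarrow> I \<in> Ob K \<and>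
     (\<forall>A B C x y d. rlz K A B C x y d \<longrightarrow>
        (\<forall>a\<in>Hom K A I. \<exists>b\<in>Hom K B I. cmp K A B I b x = a))"

definition enough_projectives :: "('o,'m,'e) extri \<Rightarrow> bool" where
  "enough_projectives K \<longleftrightarrow>
     (\<forall>C\<in>Ob K. \<exists>A P. etri K A P C \<and> projective_obj K P)"

definition enough_injectives :: "('o,'m,'e) extri \<Rightarrow> bool" where
  "enough_injectives K \<longleftrightarrow>
     (\<forall>A\<in>Ob K. \<exists>I C. etri K A I C \<and> injective_obj K I)"

text \<open>Full additive subcategories closed under isomorphisms and direct summands
  (identified with their object classes).\<close>
definition subcat :: "('o,'m,'e) extri \<Rightarrow> 'o set \<Rightarrow> bool" where
  "subcat K X \<longleftrightarrow> X \<subseteq> Ob K \<and>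
     (\<exists>Z\<in>X. idm K Z = mzero K Z Z) \<and>
     (\<forall>A C S i1 i2 p1 p2. biprod K A C S i1 i2 p1 p2 \<longrightarrow> (S \<in> X \<longleftrightarrow> A \<in> X \<and> C \<in> X)) \<and>
     (\<forall>A B f. A \<in> X \<and> B \<in> Ob K \<and> isom K A B f \<longrightarrow> B \<in> X)"

definition extension_closed :: "('o,'m,'e) extri \<Rightarrow> 'o set \<Rightarrow> bool" where
  "extension_closed K X \<longleftrightarrow>
     (\<forall>A B C. etri K A B C \<and> A \<in> X \<and> C \<in> X \<longrightarrow> B \<in> X)"

definition cogenerator :: "('o,'m,'e) extri \<Rightarrow> 'o set \<Rightarrow> 'o set \<Rightarrow> bool" where
  "cogenerator K W X \<longleftrightarrow> W \<subseteq> X \<and>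
     (\<forall>Y\<in>X. \<exists>V\<in>W. \<exists>Y'\<in>X. etri K Y V Y')"

definition hatX :: "('o,'m,'e) extri \<Rightarrow> 'o set \<Rightarrow> nat \<Rightarrow> 'o set" where
  "hatX K X n = {C. \<exists>Kk Xs :: nat \<Rightarrow> 'o. Kk 0 = C \<and>
       (\<forall>i<n. Xs i \<in> X \<and> etri K (Kk (Suc i)) (Xs i) (Kk i)) \<and> Kk n \<in> X}"

end

theory Submission
  imports Defs
begin


locale ETC =
  fixes K :: "('o,'m,'e) extri"
  assumes ext: "extriangulated K"
begin

lemma addc: "additive_cat K" using ext by (simp add: extriangulated_def)
lemma biE: "biadditive_E K" using ext by (simp add: extriangulated_def)
lemma rea: "realization K" using ext by (simp add: extriangulated_def)
lemma area: "additive_realization K" using ext by (simp add: extriangulated_def)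
lemma et3: "ET3 K" using ext by (simp add: extriangulated_def)
lemma et4: "ET4 K" using ext by (simp add: extriangulated_def)

lemmas AC = addc[unfolded additive_cat_def]
lemmas ac1 = AC[THEN conjunct1]
lemmas ac2 = AC[THEN conjunct2, THEN conjunct1]
lemmas ac3 = AC[THEN conjunct2, THEN conjunct2, THEN conjunct1]
lemmas ac4 = AC[THEN conjunct2, THEN conjunct2, THEN conjunct2, THEN conjunct1]
lemmas ac5 = AC[THEN conjunct2, THEN conjunct2, THEN conjunct2, THEN conjunct2, THEN conjunct1]
lemmas ac6 = AC[THEN conjunct2, THEN conjunct2, THEN conjunct2, THEN conjunct2, THEN conjunct2, THEN conjunct1]
lemmas ac7 = AC[THEN conjunct2, THEN conjunct2, THEN conjunct2, THEN conjunct2, THEN conjunct2, THEN conjunct2, THEN conjunct1]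
lemmas ac8 = AC[THEN conjunct2, THEN conjunct2, THEN conjunct2, THEN conjunct2, THEN conjunct2, THEN conjunct2, THEN conjunct2, THEN conjunct1]
lemmas ac9 = AC[THEN conjunct2, THEN conjunct2, THEN conjunct2, THEN conjunct2, THEN conjunct2, THEN conjunct2, THEN conjunct2, THEN conjunct2]

lemma cmp_in[simp]: "A\<in>Ob K \<Longrightarrow> B\<in>Ob K \<Longrightarrow> C\<in>Ob K \<Longrightarrow> f\<in>Hom K A B \<Longrightarrow> g\<in>Hom K B C \<Longrightarrow>
  cmp K A B C g f \<in> Hom K A C"
  using ac1 by blast
lemma id_in[simp]: "A\<in>Ob K \<Longrightarrow> idm K A \<in> Hom K A A"
  using ac2 by blast
lemma id_l[simp]: "A\<in>Ob K \<Longrightarrow> B\<in>Ob K \<Longrightarrow> f\<in>Hom K A B \<Longrightarrow> cmp K A B B (idm K B) f = f"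
  using ac3 by blast
lemma id_r[simp]: "A\<in>Ob K \<Longrightarrow> B\<in>Ob K \<Longrightarrow> f\<in>Hom K A B \<Longrightarrow> cmp K A A B f (idm K A) = f"
  using ac3 by blast
lemma assoc[simp]: "A\<in>Ob K \<Longrightarrow> B\<in>Ob K \<Longrightarrow> C\<in>Ob K \<Longrightarrow> D\<in>Ob K \<Longrightarrow>
   f\<in>Hom K A B \<Longrightarrow> g\<in>Hom K B C \<Longrightarrow> h\<in>Hom K C D \<Longrightarrow>
   cmp K A B D (cmp K B C D h g) f = cmp K A C D h (cmp K A B C g f)"
  using ac4 by metis
lemma hgrp: "A\<in>Ob K \<Longrightarrow> B\<in>Ob K \<Longrightarrow> comm_group (hom_group K A B)"
  using ac5 by blast
lemma distl: "A\<in>Ob K \<Longrightarrow> B\<in>Ob K \<Longrightarrow> C\<in>Ob K \<Longrightarrow> f\<in>Hom K A B \<Longrightarrow> f'\<in>Hom K A B \<Longrightarrow> g\<in>Hom K B C \<Longrightarrow>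
  cmp K A B C g (madd K A B f f') = madd K A C (cmp K A B C g f) (cmp K A B C g f')"
  using ac6 by blast
lemma distr: "A\<in>Ob K \<Longrightarrow> B\<in>Ob K \<Longrightarrow> C\<in>Ob K \<Longrightarrow> f\<in>Hom K A B \<Longrightarrow> g\<in>Hom K B C \<Longrightarrow> g'\<in>Hom K B C \<Longrightarrow>
  cmp K A B C (madd K B C g g') f = madd K A C (cmp K A B C g f) (cmp K A B C g' f)"
  using ac7 by blast
lemma zero_obj: "\<exists>Z\<in>Ob K. idm K Z = mzero K Z Z"
  using ac8 by blast
lemma biprod_ex: "A\<in>Ob K \<Longrightarrow> C\<in>Ob K \<Longrightarrow> \<exists>S i1 i2 p1 p2. biprod K A C S i1 i2 p1 p2"
  using ac9 by blast

definition minv where "minv A B f = inv\<^bsub>hom_group K A B\<^esub> f"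

lemma hg_simps: "carrier (hom_group K A B) = Hom K A B" "mult (hom_group K A B) = madd K A B"
  "one (hom_group K A B) = mzero K A B" by (simp_all add: hom_group_def)

context fixes A B assumes AB: "A\<in>Ob K" "B\<in>Ob K"
begin
interpretation G: comm_group "hom_group K A B" using hgrp AB by blast

lemma mzero_in[simp]: "mzero K A B \<in> Hom K A B"
  using G.one_closed by (simp add: hg_simps)
lemma madd_in[simp]: "f\<in>Hom K A B \<Longrightarrow> g\<in>Hom K A B \<Longrightarrow> madd K A B f g \<in> Hom K A B"
  using G.m_closed by (simp add: hg_simps)
lemma minv_in[simp]: "f\<in>Hom K A B \<Longrightarrow> minv A B f \<in> Hom K A B"
  using G.inv_closed by (simp add: hg_simps minv_def)
lemma madd_0l[simp]: "f\<in>Hom K A B \<Longrightarrow> madd K A B (mzero K A B) f = f"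
  using G.l_one by (simp add: hg_simps)
lemma madd_0r[simp]: "f\<in>Hom K A B \<Longrightarrow> madd K A B f (mzero K A B) = f"
  using G.r_one by (simp add: hg_simps)
lemma madd_assoc: "f\<in>Hom K A B \<Longrightarrow> g\<in>Hom K A B \<Longrightarrow> h\<in>Hom K A B \<Longrightarrow>
   madd K A B (madd K A B f g) h = madd K A B f (madd K A B g h)"
  using G.m_assoc by (simp add: hg_simps)
lemma madd_comm: "f\<in>Hom K A B \<Longrightarrow> g\<in>Hom K A B \<Longrightarrow> madd K A B f g = madd K A B g f"
  using G.m_comm by (simp add: hg_simps)
lemma madd_inv_r[simp]: "f\<in>Hom K A B \<Longrightarrow> madd K A B f (minv A B f) = mzero K A B"
  using G.r_inv by (simp add: hg_simps minv_def)
lemma madd_inv_l[simp]: "f\<in>Hom K A B \<Longrightarrow> madd K A B (minv A B f) f = mzero K A B"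
  using G.l_inv by (simp add: hg_simps minv_def)
lemma madd_cancel_r: "f\<in>Hom K A B \<Longrightarrow> g\<in>Hom K A B \<Longrightarrow> madd K A B f g = f \<Longrightarrow> g = mzero K A B"
  using G.l_cancel_one by (simp add: hg_simps)
lemma madd_cancel_l: "f\<in>Hom K A B \<Longrightarrow> g\<in>Hom K A B \<Longrightarrow> madd K A B g f = f \<Longrightarrow> g = mzero K A B"
  using G.r_cancel_one by (simp add: hg_simps)
end

lemma cmp_0r[simp]: assumes "A\<in>Ob K" "B\<in>Ob K" "C\<in>Ob K" "g\<in>Hom K B C"
  shows "cmp K A B C g (mzero K A B) = mzero K A C"
proof -
  let ?z = "cmp K A B C g (mzero K A B)"
  have "?z = madd K A C ?z ?z"
    using distl[of A B C "mzero K A B" "mzero K A B" g] assms by simp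
  then show ?thesis using madd_cancel_r[of A C ?z ?z] assms by (metis cmp_in mzero_in)
qed

lemma cmp_0l[simp]: assumes "A\<in>Ob K" "B\<in>Ob K" "C\<in>Ob K" "f\<in>Hom K A B"
  shows "cmp K A B C (mzero K B C) f = mzero K A C"
proof -
  let ?z = "cmp K A B C (mzero K B C) f"
  have "?z = madd K A C ?z ?z"
    using distr[of A B C f "mzero K B C" "mzero K B C"] assms by simp
  then show ?thesis using madd_cancel_r[of A C ?z ?z] assms by (metis cmp_in mzero_in)
qed


lemmas BE = biE[unfolded biadditive_E_def]
lemmas be1 = BE[THEN conjunct1]
lemmas be2 = BE[THEN conjunct2, THEN conjunct1]
lemmas be3 = BE[THEN conjunct2, THEN conjunct2, THEN conjunct1]
lemmas be4 = BE[THEN conjunct2, THEN conjunct2, THEN conjunct2, THEN conjunct1]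
lemmas be5 = BE[THEN conjunct2, THEN conjunct2, THEN conjunct2, THEN conjunct2, THEN conjunct1]
lemmas be6 = BE[THEN conjunct2, THEN conjunct2, THEN conjunct2, THEN conjunct2, THEN conjunct2, THEN conjunct1]
lemmas be11 = BE[THEN conjunct2, THEN conjunct2, THEN conjunct2, THEN conjunct2, THEN conjunct2, THEN conjunct2,
   THEN conjunct2, THEN conjunct2, THEN conjunct2, THEN conjunct2]

lemma egrp: "C\<in>Ob K \<Longrightarrow> A\<in>Ob K \<Longrightarrow> comm_group (ext_group K C A)" using be1 by blast
lemma epush_in[simp]: "C\<in>Ob K \<Longrightarrow> A\<in>Ob K \<Longrightarrow> A'\<in>Ob K \<Longrightarrow> a\<in>Hom K A A' \<Longrightarrow> d\<in>Ext K C A \<Longrightarrow>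
   epush K C A A' a d \<in> Ext K C A'" using be2 by blast
lemma epull_in[simp]: "C'\<in>Ob K \<Longrightarrow> C\<in>Ob K \<Longrightarrow> A\<in>Ob K \<Longrightarrow> c\<in>Hom K C' C \<Longrightarrow> d\<in>Ext K C A \<Longrightarrow>
   epull K C' C A c d \<in> Ext K C' A" using be3 by blast
lemma epush_id[simp]: "C\<in>Ob K \<Longrightarrow> A\<in>Ob K \<Longrightarrow> d\<in>Ext K C A \<Longrightarrow> epush K C A A (idm K A) d = d"
  using be4 by blast
lemma epull_id[simp]: "C\<in>Ob K \<Longrightarrow> A\<in>Ob K \<Longrightarrow> d\<in>Ext K C A \<Longrightarrow> epull K C C A (idm K C) d = d"
  using be4 by blast
lemma epull_comp: "C''\<in>Ob K \<Longrightarrow> C'\<in>Ob K \<Longrightarrow> C\<in>Ob K \<Longrightarrow> A\<in>Ob K \<Longrightarrow> c\<in>Hom K C' C \<Longrightarrow> c'\<in>Hom K C'' C' \<Longrightarrow>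
   d\<in>Ext K C A \<Longrightarrow>
   epull K C'' C' A c' (epull K C' C A c d) = epull K C'' C A (cmp K C'' C' C c c') d"
  using be6 by blast
lemma epull_madd: "C'\<in>Ob K \<Longrightarrow> C\<in>Ob K \<Longrightarrow> A\<in>Ob K \<Longrightarrow> c\<in>Hom K C' C \<Longrightarrow> e\<in>Hom K C' C \<Longrightarrow> d\<in>Ext K C A \<Longrightarrow>
   epull K C' C A (madd K C' C c e) d = eadd K C' A (epull K C' C A c d) (epull K C' C A e d)"
  using be11 by blast

lemma eg_simps: "carrier (ext_group K A B) = Ext K A B" "mult (ext_group K A B) = eadd K A B"
  "one (ext_group K A B) = ezero K A B" by (simp_all add: ext_group_def)

context fixes C A assumes CA: "C\<in>Ob K" "A\<in>Ob K"
begin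
interpretation E: comm_group "ext_group K C A" using egrp CA by blast
lemma ezero_in[simp]: "ezero K C A \<in> Ext K C A"
  using E.one_closed by (simp add: eg_simps)
lemma eadd_in[simp]: "f\<in>Ext K C A \<Longrightarrow> g\<in>Ext K C A \<Longrightarrow> eadd K C A f g \<in> Ext K C A"
  using E.m_closed by (simp add: eg_simps)
lemma eadd_cancel_r: "f\<in>Ext K C A \<Longrightarrow> g\<in>Ext K C A \<Longrightarrow> eadd K C A f g = f \<Longrightarrow> g = ezero K C A"
  using E.l_cancel_one by (simp add: eg_simps)
lemma eadd_0r[simp]: "f\<in>Ext K C A \<Longrightarrow> eadd K C A f (ezero K C A) = f"
  using E.r_one by (simp add: eg_simps)
end

lemma epull_zero_map: assumes "C'\<in>Ob K" "C\<in>Ob K" "A\<in>Ob K" "d\<in>Ext K C A"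
  shows "epull K C' C A (mzero K C' C) d = ezero K C' A"
proof -
  let ?z = "epull K C' C A (mzero K C' C) d"
  have "?z = eadd K C' A ?z ?z"
    using epull_madd[of C' C A "mzero K C' C" "mzero K C' C" d] assms by simp
  then show ?thesis using eadd_cancel_r[of C' A ?z ?z] assms by (metis epull_in mzero_in)
qed

lemmas RE = rea[unfolded realization_def]
lemmas re1 = RE[THEN conjunct1]
lemmas re2 = RE[THEN conjunct2, THEN conjunct1]
lemmas re3 = RE[THEN conjunct2, THEN conjunct2, THEN conjunct1]
lemmas re4 = RE[THEN conjunct2, THEN conjunct2, THEN conjunct2]

lemma rlz_D: "rlz K A B C x y d \<Longrightarrow> A\<in>Ob K \<and> B\<in>Ob K \<and> C\<in>Ob K \<and> x\<in>Hom K A B \<and> y\<in>Hom K B C \<and> d\<in>Ext K C A"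
  using re1 by blast
lemma rlz_ex: "A\<in>Ob K \<Longrightarrow> C\<in>Ob K \<Longrightarrow> d\<in>Ext K C A \<Longrightarrow> \<exists>B x y. rlz K A B C x y d"
  using re2 by blast
lemma rlz_eq: "rlz K A B C x y d \<Longrightarrow> B'\<in>Ob K \<Longrightarrow> x'\<in>Hom K A B' \<Longrightarrow> y'\<in>Hom K B' C \<Longrightarrow> isom K B B' b \<Longrightarrow>
   cmp K A B B' b x = x' \<Longrightarrow> cmp K B B' C y' b = y \<Longrightarrow> rlz K A B' C x' y' d"
  using re3 unfolding seq_equiv_def by blast
lemma rlz_mor: "rlz K A B C x y d \<Longrightarrow> rlz K A' B' C' x' y' d' \<Longrightarrow> a\<in>Hom K A A' \<Longrightarrow> c\<in>Hom K C C' \<Longrightarrow>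
   epush K C A A' a d = epull K C C' A' c d' \<Longrightarrow>
   \<exists>b\<in>Hom K B B'. cmp K A B B' b x = cmp K A A' B' x' a \<and> cmp K B B' C' y' b = cmp K B C C' c y"
  using re4 by blast

lemmas AR = area[unfolded additive_realization_def]
lemma split_rlz: "biprod K A C S i1 i2 p1 p2 \<Longrightarrow> rlz K A S C i1 p2 (ezero K C A)"
  using AR by blast
lemmas sum_rlz = AR[THEN conjunct2, rule_format]

lemma et3_app: "rlz K A B C x y d \<Longrightarrow> rlz K A' B' C' x' y' d' \<Longrightarrow> a \<in> Hom K A A' \<Longrightarrow> b \<in> Hom K B B' \<Longrightarrow>
        cmp K A B B' b x = cmp K A A' B' x' a \<Longrightarrow>
        (\<exists>c\<in>Hom K C C'. cmp K B C C' c y = cmp K B B' C' y' b \<and>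
                          epush K C A A' a d = epull K C C' A' c d')"
  using et3 unfolding ET3_def by blast

lemmas et4_app = et4[unfolded ET4_def, rule_format]

lemma biprod_zero: assumes "Z\<in>Ob K" "idm K Z = mzero K Z Z" "A\<in>Ob K"
  shows "biprod K A Z A (idm K A) (mzero K Z A) (idm K A) (mzero K A Z)"
  using assms unfolding biprod_def by simp

lemma biprod_swap: "biprod K A C S i1 i2 p1 p2 \<Longrightarrow> biprod K C A S i2 i1 p2 p1"
  unfolding biprod_def by (auto simp: madd_comm)

lemma nil_iso: assumes T: "T\<in>Ob K" and v: "v\<in>Hom K T T" and vv: "cmp K T T T v v = mzero K T T"
  shows "isom K T T (madd K T T (idm K T) v)"
proof -
  let ?w = "minv T T v" let ?i = "idm K T" let ?p = "madd K T T ?i v" let ?q = "madd K T T ?i ?w"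
  let ?c = "cmp K T T T" let ?a = "madd K T T" let ?z = "mzero K T T"
  have w: "?w \<in> Hom K T T" using T v by simp
  have vw: "?c v ?w = ?z"
  proof -
    have "?c v (?a v ?w) = ?z" using T v by simp
    moreover have "?c v (?a v ?w) = ?a (?c v v) (?c v ?w)" by (rule distl) (simp_all add: T v w)
    ultimately show ?thesis using vv T v w by simp
  qed
  have wv: "?c ?w v = ?z"
  proof -
    have "?c (?a v ?w) v = ?z" using T v by simp
    moreover have "?c (?a v ?w) v = ?a (?c v v) (?c ?w v)" by (rule distr) (simp_all add: T v w)
    ultimately show ?thesis using vv T v w by simp
  qed
  have p: "?p \<in> Hom K T T" "?q \<in> Hom K T T" using T v w by simp_all
  have "?c ?p ?q = ?a (?c ?p ?i) (?c ?p ?w)" by (rule distl) (simp_all add: T w p)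
  also have "\<dots> = ?a ?p (?a (?c ?i ?w) (?c v ?w))" using distr[of T T T ?w ?i v] T v w p by simp
  also have "\<dots> = ?a ?p (?a ?w (?c v ?w))" using T w by simp
  also have "\<dots> = ?i" using vw T v w by (simp add: madd_assoc)
  finally have 1: "?c ?p ?q = ?i" .
  have "?c ?q ?p = ?a (?c ?q ?i) (?c ?q v)" by (rule distl) (simp_all add: T v p)
  also have "\<dots> = ?a ?q (?a (?c ?i v) (?c ?w v))" using distr[of T T T v ?i ?w] T v w p by simp
  also have "\<dots> = ?a ?q (?a v (?c ?w v))" using T v by simp
  also have "\<dots> = ?i" using wv T v w by (simp add: madd_assoc)
  finally have 2: "?c ?q ?p = ?i" .
  show ?thesis unfolding isom_def using 1 2 p by blast
qed




lemma exact_pull: assumes r: "rlz K A B C x y d" and T: "T\<in>Ob K" and g: "g\<in>Hom K T C"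
  and z: "epull K T C A g d = ezero K T A"
  shows "\<exists>h\<in>Hom K T B. cmp K T B C y h = g"
proof -
  have D: "A\<in>Ob K" "B\<in>Ob K" "C\<in>Ob K" "x\<in>Hom K A B" "y\<in>Hom K B C" "d\<in>Ext K C A" using rlz_D[OF r] by auto
  obtain S i1 i2 p1 p2 where bp: "biprod K A T S i1 i2 p1 p2" using biprod_ex D T by blast
  have B: "S\<in>Ob K" "i1\<in>Hom K A S" "i2\<in>Hom K T S" "p1\<in>Hom K S A" "p2\<in>Hom K S T"
    "cmp K T S T p2 i2 = idm K T" using bp unfolding biprod_def by auto
  have r0: "rlz K A S T i1 p2 (epull K T C A g d)" using split_rlz[OF bp] z by simp
  have "epush K T A A (idm K A) (epull K T C A g d) = epull K T C A g d" using D T g by simp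
  then obtain b where b: "b\<in>Hom K S B" "cmp K S B C y b = cmp K S T C g p2"
    using rlz_mor[OF r0 r, of "idm K A" g] D g by auto
  have "cmp K T S C (cmp K S B C y b) i2 = cmp K T S C (cmp K S T C g p2) i2"
    using b by simp
  then have "cmp K T B C y (cmp K T S B b i2) = g" using b(1) B D T g by simp
  then show ?thesis using b B D T by (intro bexI[of _ "cmp K T S B b i2"]) auto
qed

lemma iso_from: assumes C: "C\<in>Ob K" "C'\<in>Ob K" and c: "c\<in>Hom K C C'" "c'\<in>Hom K C' C"
  and u: "isom K C C (cmp K C C' C c' c)" and u': "isom K C' C' (cmp K C' C C' c c')"
  shows "isom K C C' c"
proof -
  obtain w where w: "w\<in>Hom K C C" "cmp K C C C w (cmp K C C' C c' c) = idm K C"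
    using u unfolding isom_def by blast
  obtain w' where w': "w'\<in>Hom K C' C'" "cmp K C' C' C' (cmp K C' C C' c c') w' = idm K C'"
    using u' unfolding isom_def by blast
  let ?L = "cmp K C' C C w c'" let ?R = "cmp K C' C' C c' w'"
  have L: "cmp K C C' C ?L c = idm K C" using w C c by simp
  have R: "cmp K C' C C' c ?R = idm K C'" using w' C c by simp
  have Lh: "?L \<in> Hom K C' C" "?R \<in> Hom K C' C" using C c w w' by simp_all
  have "?L = cmp K C' C' C ?L (idm K C')" using Lh C by simp
  also have "\<dots> = cmp K C' C' C ?L (cmp K C' C C' c ?R)" using R by simp
  also have "\<dots> = cmp K C' C C (cmp K C C' C ?L c) ?R" by (rule assoc[symmetric]) (simp_all add: C c Lh)
  also have "\<dots> = ?R" using L Lh C by simp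
  finally have "?L = ?R" .
  then show ?thesis unfolding isom_def using L R c C w w' by (intro conjI bexI[of _ ?L]) auto
qed

lemma cu_half: assumes r: "rlz K A B C x y d" and r': "rlz K A B C' x y' d'"
  and c: "c\<in>Hom K C C'" "cmp K B C C' c y = y'" "d = epull K C C' A c d'"
  and c': "c'\<in>Hom K C' C" "cmp K B C' C c' y' = y" "d' = epull K C' C A c' d"
  shows "isom K C C (cmp K C C' C c' c)"
proof -
  have D: "A\<in>Ob K" "B\<in>Ob K" "C\<in>Ob K" "x\<in>Hom K A B" "y\<in>Hom K B C" "d\<in>Ext K C A" using rlz_D[OF r] by auto
  have D': "C'\<in>Ob K" "y'\<in>Hom K B C'" "d'\<in>Ext K C' A" using rlz_D[OF r'] by auto
  let ?u = "cmp K C C' C c' c" let ?i = "idm K C" let ?v = "madd K C C ?u (minv C C ?i)"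
  have u: "?u \<in> Hom K C C" using c(1) c'(1) D D' by simp
  have v: "?v \<in> Hom K C C" using u D by simp
  have uy: "cmp K B C C ?u y = y" using c(1,2) c'(1,2) D D' by simp
  have ud: "epull K C C A ?u d = d"
  proof -
    have "epull K C C A ?u d = epull K C C' A c (epull K C' C A c' d)"
      using epull_comp[of C C' C A c' c d] c(1) c'(1) D D' by simp
    also have "\<dots> = d" using c(3) c'(3) by simp
    finally show ?thesis .
  qed
  have zd: "eadd K C A d (epull K C C A (minv C C ?i) d) = ezero K C A"
  proof -
    have "eadd K C A d (epull K C C A (minv C C ?i) d) = epull K C C A (madd K C C ?i (minv C C ?i)) d"
      using epull_madd[of C C A ?i "minv C C ?i" d] D by simp
    also have "\<dots> = ezero K C A" using epull_zero_map D by simp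
    finally show ?thesis .
  qed
  have vd: "epull K C C A ?v d = ezero K C A"
    using epull_madd[of C C A ?u "minv C C ?i" d] u D ud zd by simp
  obtain h where h: "h\<in>Hom K C B" "cmp K C B C y h = ?v" using exact_pull[OF r D(3) v vd] by blast
  have vy: "cmp K B C C ?v y = mzero K B C"
  proof -
    have "cmp K B C C ?v y = madd K B C y (cmp K B C C (minv C C ?i) y)"
      using distr[of B C C y ?u "minv C C ?i"] uy u D by simp
    also have "\<dots> = cmp K B C C (madd K C C ?i (minv C C ?i)) y"
      using distr[of B C C y ?i "minv C C ?i"] D by simp
    also have "\<dots> = mzero K B C" using D by simp
    finally show ?thesis .
  qed
  have vv: "cmp K C C C ?v ?v = mzero K C C"
  proof -
    have "cmp K C C C ?v ?v = cmp K C C C ?v (cmp K C B C y h)" using h by simp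
    also have "\<dots> = cmp K C B C (cmp K B C C ?v y) h" using h v D by simp
    also have "\<dots> = mzero K C C" using vy h D by simp
    finally show ?thesis .
  qed
  have "madd K C C ?i ?v = ?u"
  proof -
    have "madd K C C ?i ?v = madd K C C ?v ?i" using madd_comm v D by simp
    also have "\<dots> = madd K C C ?u (madd K C C (minv C C ?i) ?i)" using madd_assoc u D by simp
    also have "\<dots> = ?u" using u D by simp
    finally show ?thesis .
  qed
  then show ?thesis using nil_iso[OF D(3) v vv] by simp
qed

lemma coker_unique: assumes r: "rlz K A B C x y d" and r': "rlz K A B C' x y' d'"
  shows "\<exists>c. isom K C C' c"
proof -
  have D: "A\<in>Ob K" "B\<in>Ob K" "C\<in>Ob K" "x\<in>Hom K A B" "y\<in>Hom K B C" "d\<in>Ext K C A" using rlz_D[OF r] by auto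
  have D': "C'\<in>Ob K" "y'\<in>Hom K B C'" "d'\<in>Ext K C' A" using rlz_D[OF r'] by auto
  obtain c where c: "c\<in>Hom K C C'" "cmp K B C C' c y = cmp K B B C' y' (idm K B)"
     "epush K C A A (idm K A) d = epull K C C' A c d'"
    using et3_app[OF r r', of "idm K A" "idm K B"] D by auto
  obtain c' where c': "c'\<in>Hom K C' C" "cmp K B C' C c' y' = cmp K B B C y (idm K B)"
     "epush K C' A A (idm K A) d' = epull K C' C A c' d"
    using et3_app[OF r' r, of "idm K A" "idm K B"] D by auto
  have c2: "cmp K B C C' c y = y'" "d = epull K C C' A c d'" using c D D' by auto
  have c2': "cmp K B C' C c' y' = y" "d' = epull K C' C A c' d" using c' D D' by auto
  have "isom K C C (cmp K C C' C c' c)" using cu_half[OF r r' c(1) c2 c'(1) c2'] .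
  moreover have "isom K C' C' (cmp K C' C C' c c')" using cu_half[OF r' r c'(1) c2' c(1) c2] .
  ultimately show ?thesis using iso_from D D' c c' by blast
qed



lemma zero_chain: "A\<in>Ob K \<Longrightarrow> B\<in>Ob K \<Longrightarrow> C\<in>Ob K \<Longrightarrow> X\<in>Ob K \<Longrightarrow> h\<in>Hom K X A \<Longrightarrow>
  f\<in>Hom K A B \<Longrightarrow> g\<in>Hom K B C \<Longrightarrow> cmp K A B C g f = mzero K A C \<Longrightarrow>
  cmp K X B C g (cmp K X A B f h) = mzero K X C"
  by (metis assoc cmp_0l)
lemma id_chain: "A\<in>Ob K \<Longrightarrow> B\<in>Ob K \<Longrightarrow> X\<in>Ob K \<Longrightarrow> h\<in>Hom K X A \<Longrightarrow>
  f\<in>Hom K A B \<Longrightarrow> g\<in>Hom K B A \<Longrightarrow> cmp K A B A g f = idm K A \<Longrightarrow>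
  cmp K X B A g (cmp K X A B f h) = h"
  by (metis assoc id_l)

lemma twist: assumes bp: "biprod K A D T ta tb pa pb" and x2: "x2\<in>Hom K A D"
  shows "\<exists>y'. rlz K A T D (madd K A T ta (cmp K A D T tb x2)) y' (ezero K D A)"
proof -
  have B: "A\<in>Ob K" "D\<in>Ob K" "T\<in>Ob K" "ta\<in>Hom K A T" "tb\<in>Hom K D T" "pa\<in>Hom K T A" "pb\<in>Hom K T D"
    "cmp K A T A pa ta = idm K A" "cmp K D T D pb tb = idm K D"
    "cmp K D T A pa tb = mzero K D A" "cmp K A T D pb ta = mzero K A D"
    using bp unfolding biprod_def by auto
  let ?n = "cmp K T D T tb (cmp K T A D x2 pa)"
  have n: "?n \<in> Hom K T T" using B x2 by simp
  have pan: "cmp K T T A pa ?n = mzero K T A" using B x2 by (intro zero_chain) simp_all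
  have nn: "cmp K T T T ?n ?n = mzero K T T"
  proof -
    have "cmp K T T T ?n ?n = cmp K T D T tb (cmp K T A D x2 (cmp K T T A pa ?n))"
      using B x2 n by simp
    also have "\<dots> = mzero K T T" using pan B x2 by simp
    finally show ?thesis .
  qed
  let ?p = "madd K T T (idm K T) ?n"
  have iso: "isom K T T ?p" using nil_iso[OF B(3) n nn] .
  then obtain q where q: "q\<in>Hom K T T" "cmp K T T T q ?p = idm K T"
    unfolding isom_def by blast
  have p: "?p \<in> Hom K T T" using n B by simp
  have pta: "cmp K A T T ?p ta = madd K A T ta (cmp K A D T tb x2)"
    using distr[of A T T ta "idm K T" ?n] B x2 n by simp
  have "rlz K A T D (madd K A T ta (cmp K A D T tb x2)) (cmp K T T D pb q) (ezero K D A)"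
    apply (rule rlz_eq[OF split_rlz[OF bp] B(3) _ _ iso pta])
    using B x2 q p by simp_all
  then show ?thesis by blast
qed

lemma half: assumes r1: "rlz K A B1 C1 x1 y1 d1" and x2: "x2\<in>Hom K A B2"
  and bp: "biprod K B1 B2 S i1 i2 p1 p2"
  shows "\<exists>M h dd. rlz K A S M (madd K A S (cmp K A B1 S i1 x1) (cmp K A B2 S i2 x2)) h dd \<and> etri K B2 M C1"
proof -
  have D: "A\<in>Ob K" "B1\<in>Ob K" "C1\<in>Ob K" "x1\<in>Hom K A B1" "y1\<in>Hom K B1 C1" "d1\<in>Ext K C1 A"
    using rlz_D[OF r1] by auto
  have B: "B2\<in>Ob K" "S\<in>Ob K" "i1\<in>Hom K B1 S" "i2\<in>Hom K B2 S" "p1\<in>Hom K S B1" "p2\<in>Hom K S B2"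
    using bp unfolding biprod_def by auto
  obtain Z where Z: "Z\<in>Ob K" "idm K Z = mzero K Z Z" using zero_obj by blast
  obtain T ta tb pa pb where bT: "biprod K A B2 T ta tb pa pb" using biprod_ex D B by blast
  have BT: "T\<in>Ob K" "ta\<in>Hom K A T" "tb\<in>Hom K B2 T" "pa\<in>Hom K T A" "pb\<in>Hom K T B2"
    "cmp K A T A pa ta = idm K A" "cmp K B2 T B2 pb tb = idm K B2"
    "cmp K B2 T A pa tb = mzero K B2 A" "cmp K A T B2 pb ta = mzero K A B2"
    using bT unfolding biprod_def by auto
  let ?j = "madd K A T ta (cmp K A B2 T tb x2)"
  obtain y' where rj: "rlz K A T B2 ?j y' (ezero K B2 A)" using twist[OF bT x2] by blast
  have rt: "rlz K B2 B2 Z (idm K B2) (mzero K B2 Z) (ezero K Z B2)"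
    using split_rlz[OF biprod_zero[OF Z B(1)]] .
  have bC: "biprod K C1 Z C1 (idm K C1) (mzero K Z C1) (idm K C1) (mzero K C1 Z)"
    using biprod_zero[OF Z D(3)] .
  let ?s = "madd K T S (cmp K T A S (cmp K A B1 S i1 x1) pa) (cmp K T B2 S (cmp K B2 B2 S i2 (idm K B2)) pb)"
  have "\<exists>\<tau> e. rlz K T S C1 ?s \<tau> e"
    using sum_rlz[of A B1 C1 x1 y1 d1 B2 B2 Z "idm K B2" "mzero K B2 Z" "ezero K Z B2" T ta tb pa pb
       S i1 i2 p1 p2 C1 "idm K C1" "mzero K Z C1" "idm K C1" "mzero K C1 Z"] r1 rt bT bp bC by blast
  then obtain \<tau> e where rs: "rlz K T S C1 ?s \<tau> e" by blast
  have zc: "cmp K A T A pa (cmp K A B2 T tb x2) = mzero K A A" using BT D B x2 by (intro zero_chain) simp_all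
  have ic: "cmp K A T B2 pb (cmp K A B2 T tb x2) = x2" using BT D B x2 by (intro id_chain) simp_all
  have comp: "cmp K A T S ?s ?j = madd K A S (cmp K A B1 S i1 x1) (cmp K A B2 S i2 x2)"
    using D B BT x2 zc ic by (simp add: distl distr)
  obtain E h' e1 e2 d'' where E: "rlz K A S E (cmp K A T S ?s ?j) h' d''"
     "rlz K B2 E C1 e1 e2 (epush K C1 T B2 y' e)"
    using et4_app[OF conjI[OF rj rs]] by blast
  show ?thesis using E comp unfolding etri_def by auto
qed

lemma po: assumes r1: "rlz K A B1 C1 x1 y1 d1" and r2: "rlz K A B2 C2 x2 y2 d2"
  shows "\<exists>M M' f. etri K B2 M C1 \<and> etri K B1 M' C2 \<and> isom K M' M f \<and> M\<in>Ob K"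
proof -
  have D: "A\<in>Ob K" "B1\<in>Ob K" "x1\<in>Hom K A B1" "B2\<in>Ob K" "x2\<in>Hom K A B2"
    using rlz_D[OF r1] rlz_D[OF r2] by auto
  obtain S i1 i2 p1 p2 where bp: "biprod K B1 B2 S i1 i2 p1 p2" using biprod_ex D by blast
  have B: "S\<in>Ob K" "i1\<in>Hom K B1 S" "i2\<in>Hom K B2 S" using bp unfolding biprod_def by auto
  obtain M h dd where M: "rlz K A S M (madd K A S (cmp K A B1 S i1 x1) (cmp K A B2 S i2 x2)) h dd"
    "etri K B2 M C1" using half[OF r1 D(5) bp] by blast
  obtain M' h' dd' where M': "rlz K A S M' (madd K A S (cmp K A B2 S i2 x2) (cmp K A B1 S i1 x1)) h' dd'"
    "etri K B1 M' C2" using half[OF r2 D(3) biprod_swap[OF bp]] by blast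
  have "madd K A S (cmp K A B2 S i2 x2) (cmp K A B1 S i1 x1) = madd K A S (cmp K A B1 S i1 x1) (cmp K A B2 S i2 x2)"
    using madd_comm D B by simp
  then obtain f where "isom K M' M f" using coker_unique[of A S M' _ h' dd' M h dd] M M' by auto
  moreover have "M \<in> Ob K" using rlz_D[OF M(1)] by auto
  ultimately show ?thesis using M M' by blast
qed


lemma et4_pair: assumes "rlz K A B D f f' d" "rlz K B C F g g' d'"
  shows "\<exists>E. etri K A C E \<and> etri K D E F"
  using et4_app[OF conjI[OF assms]] unfolding etri_def by blast

end

fun pW :: "('o,'m,'e) extri \<Rightarrow> 'o set \<Rightarrow> nat \<Rightarrow> 'o set" where
  "pW K W 0 = W"
| "pW K W (Suc k) = {E. \<exists>L V. V \<in> W \<and> etri K L V E \<and> L \<in> pW K W k}"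

lemma hatX_Suc: "C \<in> hatX K X (Suc m) \<Longrightarrow> \<exists>K1 X0. X0 \<in> X \<and> etri K K1 X0 C \<and> K1 \<in> hatX K X m"
proof -
  assume "C \<in> hatX K X (Suc m)"
  then obtain Kk Xs where h: "Kk 0 = C" "\<forall>i<Suc m. Xs i \<in> X \<and> etri K (Kk (Suc i)) (Xs i) (Kk i)" "Kk (Suc m) \<in> X"
    unfolding hatX_def by blast
  have "Kk 1 \<in> hatX K X m" unfolding hatX_def
    by (rule CollectI, rule exI[of _ "\<lambda>i. Kk (Suc i)"], rule exI[of _ "\<lambda>i. Xs (Suc i)"]) (use h in auto)
  then show ?thesis using h by (metis One_nat_def zero_less_Suc)
qed

lemma hatX_0: "C \<in> hatX K X 0 \<Longrightarrow> C \<in> X" unfolding hatX_def by auto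

lemma pW_chain: "L \<in> pW K W k \<Longrightarrow> \<exists>Kk Ws. Kk 1 = L \<and> (\<forall>i\<in>{1..k+1}. Ws i \<in> W) \<and>
   (\<forall>i\<in>{1..k}. etri K (Kk (Suc i)) (Ws i) (Kk i)) \<and> Kk (k+1) = Ws (k+1)"
proof (induction k arbitrary: L)
  case 0
  then show ?case by (intro exI[of _ "\<lambda>_. L"]) auto
next
  case (Suc j)
  then obtain L2 V where V: "V \<in> W" "etri K L2 V L" "L2 \<in> pW K W j" by auto
  then obtain Kk Ws where IH: "Kk 1 = L2" "\<forall>i\<in>{1..j+1}. Ws i \<in> W"
     "\<forall>i\<in>{1..j}. etri K (Kk (Suc i)) (Ws i) (Kk i)" "Kk (j+1) = Ws (j+1)" using Suc.IH by blast
  let ?K = "\<lambda>i. if i \<le> 1 then L else Kk (i - 1)" let ?W = "\<lambda>i. if i \<le> 1 then V else Ws (i - 1)"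
  have a: "\<forall>i\<in>{1..Suc j+1}. ?W i \<in> W"
  proof
    fix i assume i: "i \<in> {1..Suc j+1}"
    show "?W i \<in> W"
    proof (cases "i \<le> 1")
      case True then show ?thesis using V(1) by simp
    next
      case False then have "i - 1 \<in> {1..j+1}" using i by auto
      then show ?thesis using IH(2) False by simp
    qed
  qed
  have b: "\<forall>i\<in>{1..Suc j}. etri K (?K (Suc i)) (?W i) (?K i)"
  proof
    fix i assume i: "i \<in> {1..Suc j}"
    show "etri K (?K (Suc i)) (?W i) (?K i)"
    proof (cases "i = 1")
      case True then show ?thesis using V IH(1) by simp
    next
      case False
      then have "i - 1 \<in> {1..j}" "Suc (i - 1) = i" using i by auto
      then show ?thesis using IH(3) False i by force
    qed
  qed
  have c: "?K (Suc j + 1) = ?W (Suc j + 1)" using IH(4) by simp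
  show ?case by (rule exI[of _ ?K], rule exI[of _ ?W]) (use a b c in simp)
qed

lemma fwd: assumes E: "extriangulated K" and sX: "subcat K X" and ec: "extension_closed K X"
  and cg: "cogenerator K W X"
  shows "C \<in> hatX K X (Suc m) \<Longrightarrow> \<exists>X0 L. X0 \<in> X \<and> etri K L X0 C \<and> L \<in> pW K W m"
proof (induction m arbitrary: C)
  interpret ETC K using E by unfold_locales
  have isoX: "\<And>A B f. A \<in> X \<Longrightarrow> B \<in> Ob K \<Longrightarrow> isom K A B f \<Longrightarrow> B \<in> X"
    using sX unfolding subcat_def by blast
  have ecX: "\<And>A B C. etri K A B C \<Longrightarrow> A \<in> X \<Longrightarrow> C \<in> X \<Longrightarrow> B \<in> X"
    using ec unfolding extension_closed_def by blast
  have cgX: "\<And>Y. Y \<in> X \<Longrightarrow> \<exists>V\<in>W. \<exists>Y'\<in>X. etri K Y V Y'" using cg unfolding cogenerator_def by blast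
  {
    case 0
    obtain K1 X0 where h: "X0 \<in> X" "etri K K1 X0 C" "K1 \<in> hatX K X 0"
      using hatX_Suc[of C K X 0] 0 by auto
    note h = h(1,2) hatX_0[OF h(3)]
    obtain V Y where VY: "V \<in> W" "Y \<in> X" "etri K K1 V Y" using cgX h(3) by blast
    obtain x y d x' y' d' where r: "rlz K K1 X0 C x y d" "rlz K K1 V Y x' y' d'"
      using h(2) VY(3) unfolding etri_def by blast
    obtain M M' f where M: "etri K V M C" "etri K X0 M' Y" "isom K M' M f" "M \<in> Ob K"
      using po[OF r] by blast
    have "M \<in> X" using isoX[OF ecX[OF M(2) h(1) VY(2)] M(4) M(3)] .
    then show ?case using M(1) VY(1) by auto
  next
    case (Suc m)
    obtain K1 X0 where h: "X0 \<in> X" "etri K K1 X0 C" "K1 \<in> hatX K X (Suc m)"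
      using hatX_Suc[OF Suc.prems] by blast
    obtain Y L2 where Y: "Y \<in> X" "etri K L2 Y K1" "L2 \<in> pW K W m" using Suc.IH[OF h(3)] by blast
    obtain V Y' where VY: "V \<in> W" "Y' \<in> X" "etri K Y V Y'" using cgX Y(1) by blast
    obtain a b c a' b' c' where r0: "rlz K L2 Y K1 a b c" "rlz K Y V Y' a' b' c'"
      using Y(2) VY(3) unfolding etri_def by blast
    obtain E where Ee: "etri K L2 V E" "etri K K1 E Y'" using et4_pair[OF r0] by blast
    obtain x y d x' y' d' where r: "rlz K K1 X0 C x y d" "rlz K K1 E Y' x' y' d'"
      using h(2) Ee(2) unfolding etri_def by blast
    obtain M M' f where M: "etri K E M C" "etri K X0 M' Y'" "isom K M' M f" "M \<in> Ob K"
      using po[OF r] by blast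
    have "M \<in> X" using isoX[OF ecX[OF M(2) h(1) VY(2)] M(4) M(3)] .
    moreover have "E \<in> pW K W (Suc m)" using VY(1) Ee(1) Y(3) by auto
    ultimately show ?case using M(1) by blast
  }
qed

theorem lemma3p6:
  fixes K :: "('o,'m,'e) extri" and X W :: "'o set" and n :: nat and C :: 'o
  assumes "extriangulated K" and "enough_projectives K" and "enough_injectives K"
    and "subcat K X" and "subcat K W"
    and "extension_closed K X" and "cogenerator K W X"
    and "n \<ge> 1" and "C \<in> Ob K"
  shows "C \<in> hatX K X n \<longleftrightarrow>
    (\<exists>X0 (Kk :: nat \<Rightarrow> 'o) (Ws :: nat \<Rightarrow> 'o).
       X0 \<in> X \<and> (\<forall>i\<in>{1..n}. Ws i \<in> W) \<and>
       etri K (Kk 1) X0 C \<and>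
       (\<forall>i\<in>{1..n-1}. etri K (Kk (Suc i)) (Ws i) (Kk i)) \<and>
       Kk n = Ws n)"
proof -
  obtain m where n: "n = Suc m" using assms(8) by (cases n) auto
  have WX: "W \<subseteq> X" using assms(7) unfolding cogenerator_def by blast
  show ?thesis
  proof
    assume "C \<in> hatX K X n"
    then obtain X0 L where h: "X0 \<in> X" "etri K L X0 C" "L \<in> pW K W m"
      using fwd[OF assms(1,4,6,7)] n by blast
    obtain Kk Ws where c: "Kk 1 = L" "\<forall>i\<in>{1..m+1}. Ws i \<in> W"
      "\<forall>i\<in>{1..m}. etri K (Kk (Suc i)) (Ws i) (Kk i)" "Kk (m+1) = Ws (m+1)"
      using pW_chain[OF h(3)] by blast
    show "\<exists>X0 Kk Ws. X0 \<in> X \<and> (\<forall>i\<in>{1..n}. Ws i \<in> W) \<and> etri K (Kk 1) X0 C \<and>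
       (\<forall>i\<in>{1..n-1}. etri K (Kk (Suc i)) (Ws i) (Kk i)) \<and> Kk n = Ws n"
      using h c n by (intro exI[of _ X0] exI[of _ Kk] exI[of _ Ws]) auto
  next
    assume "\<exists>X0 Kk Ws. X0 \<in> X \<and> (\<forall>i\<in>{1..n}. Ws i \<in> W) \<and> etri K (Kk 1) X0 C \<and>
       (\<forall>i\<in>{1..n-1}. etri K (Kk (Suc i)) (Ws i) (Kk i)) \<and> Kk n = Ws n"
    then obtain X0 Kk Ws where h: "X0 \<in> X" "\<forall>i\<in>{1..n}. Ws i \<in> W" "etri K (Kk 1) X0 C"
       "\<forall>i\<in>{1..n-1}. etri K (Kk (Suc i)) (Ws i) (Kk i)" "Kk n = Ws n" by blast
    let ?K = "\<lambda>i. if i = 0 then C else Kk i" let ?X = "\<lambda>i. if i = 0 then X0 else Ws i"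
    have a: "\<forall>i<n. ?X i \<in> X \<and> etri K (?K (Suc i)) (?X i) (?K i)"
    proof (intro allI impI)
      fix i assume i: "i < n"
      show "?X i \<in> X \<and> etri K (?K (Suc i)) (?X i) (?K i)"
      proof (cases "i = 0")
        case True then show ?thesis using h(1,3) by simp
      next
        case False
        then have "i \<in> {1..n-1}" "i \<in> {1..n}" using i by auto
        then show ?thesis using h(2,4) WX False by auto
      qed
    qed
    have b: "?K n \<in> X" using h(2,5) WX n by auto
    show "C \<in> hatX K X n" unfolding hatX_def
      by (rule CollectI, rule exI[of _ ?K], rule exI[of _ ?X]) (use a b in simp)
  qed
qed

end
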